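(* Let $\eta=\pi/3$, $L\ge3$, $1\le i\le L-1$, and $u,x,x_j\in\mathbb{C}$ ($j\ne i,i+1$). Let $s=e_1\otimes e_2-e_2\otimes e_1\in\mathbb{C}^2\otimes\mathbb{C}^2$. Then for every vector $v\in(\mathbb{C}^2)^{\otimes(L-2)}$ (placed on the sites other than $i,i+1$), \[ T_L(u\,|\,x_1,\ldots,x_{i-1},x,x+2\eta,x_{i+2},\ldots,x_L)\,\big(v\otimes s_{i,i+1}\big) = r(x-u)\,r(x+2\eta-u)\ \big(T_{L-2}(u\,|\,x_1,\ldots,x_{i-1},x_{i+2},\ldots,x_L)\,v\big)\otimes s_{i,i+1}, \] where $s_{i,i+1}$ denotes $s$ placed on sites $i,i+1$ and $T_{L-2}$ acts on the sites other than $i,i+1$ (in their induced order).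
   Context: Theta functions with nome $p^2$, where $p=e^{i\pi\tau}$, $\operatorname{Im}\tau>0$: $\theta_1(x;q)=2\sum_{n\ge0}(-1)^nq^{(n+1/2)^2}\sin((2n+1)x)$, $\theta_4(x;q)=1+2\sum_{n\ge1}(-1)^nq^{n^2}\cos(2nx)$, $q=p^2$. Boltzmann weights: $a(x)=\theta_4(2\eta;p^2)\theta_4(x;p^2)\theta_1(x+2\eta;p^2)$, $b(x)=\theta_4(2\eta;p^2)\theta_1(x;p^2)\theta_4(x+2\eta;p^2)$, $c(x)=\theta_1(2\eta;p^2)\theta_4(x;p^2)\theta_4(x+2\eta;p^2)$, $d(x)=\theta_1(2\eta;p^2)\theta_1(x;p^2)\theta_1(x+2\eta;p^2)$, and $r(x)=\theta_4(0;p^2)\theta_1(x+\eta;p^2)\theta_4(x+\eta;p^2)$. $R(x)$ is the operator on $\mathbb{C}^2\otimes\mathbb{C}^2$ whose matrix in the basis $e_1\otimes e_1,e_1\otimes e_2,e_2\otimes e_1,e_2\otimes e_2$ is $\begin{pmatrix}a&0&0&d\\0&b&c&0\\0&c&b&0\\d&0&0&a\end{pmatrix}(x)$. On $\mathbb{C}^2_0\otimes(\mathbb{C}^2)^{\otimes L}$ (auxiliary space $0$ and sites $1,\ldots,L$), $R_{0j}(x)$ denotes $R(x)$ acting on factors $0$ and $j$. The transfer matrix is the operator on $(\mathbb{C}^2)^{\otimes L}$ \[ T_L(u\,|\,x_1,\ldots,x_L)=\operatorname{Tr}_0\big(R_{0L}(x_L-u)\,R_{0,L-1}(x_{L-1}-u)\cdots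 R_{01}(x_1-u)\big), \] (operator composition, so $R_{01}$ is applied first), $\operatorname{Tr}_0$ being the partial trace over the auxiliary space. *)

theory Defs
  imports Complex_Main
begin

text \<open>Theta functions with nome q = p^2 = exp(2 pi i tau), p = exp(i pi tau).
  q^((n+1/2)^2) is read as exp(2 pi i tau (n+1/2)^2).\<close>

definition theta1 :: "complex \<Rightarrow> complex \<Rightarrow> complex" where
  "theta1 \<tau> z = 2 * (\<Sum>n. (-1) ^ n * exp (2 * pi * \<i> * \<tau> * (of_nat n + 1/2)^2)
                              * sin ((2 * of_nat n + 1) * z))"

definition theta4 :: "complex \<Rightarrow> complex \<Rightarrow> complex" where
  "theta4 \<tau> z = 1 + 2 * (\<Sum>n. (-1) ^ (Suc n) * exp (2 * pi * \<i> * \<tau> * (of_nat (Suc n))^2)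
                              * cos (2 * of_nat (Suc n) * z))"

definition wa :: "complex \<Rightarrow> complex \<Rightarrow> complex \<Rightarrow> complex" where
  "wa \<tau> \<eta> z = theta4 \<tau> (2*\<eta>) * theta4 \<tau> z * theta1 \<tau> (z + 2*\<eta>)"
definition wb :: "complex \<Rightarrow> complex \<Rightarrow> complex \<Rightarrow> complex" where
  "wb \<tau> \<eta> z = theta4 \<tau> (2*\<eta>) * theta1 \<tau> z * theta4 \<tau> (z + 2*\<eta>)"
definition wc :: "complex \<Rightarrow> complex \<Rightarrow> complex \<Rightarrow> complex" where
  "wc \<tau> \<eta> z = theta1 \<tau> (2*\<eta>) * theta4 \<tau> z * theta4 \<tau> (z + 2*\<eta>)"
definition wd :: "complex \<Rightarrow> complex \<Rightarrow> complex \<Rightarrow> complex" where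
  "wd \<tau> \<eta> z = theta1 \<tau> (2*\<eta>) * theta1 \<tau> z * theta1 \<tau> (z + 2*\<eta>)"
definition wr :: "complex \<Rightarrow> complex \<Rightarrow> complex \<Rightarrow> complex" where
  "wr \<tau> \<eta> z = theta4 \<tau> 0 * theta1 \<tau> (z + \<eta>) * theta4 \<tau> (z + \<eta>)"

text \<open>Basis of C^2: e1 = False, e2 = True.  Matrix entry
  R(z)[(o1,o2),(i1,i2)] = coefficient of e_o1 (x) e_o2 in R(z)(e_i1 (x) e_i2).\<close>

definition Rent :: "complex \<Rightarrow> complex \<Rightarrow> complex \<Rightarrow> bool \<times> bool \<Rightarrow> bool \<times> bool \<Rightarrow> complex" where
  "Rent \<tau> \<eta> z o' i' =
     (if o' = i' then (if fst o' = snd o' then wa \<tau> \<eta> z else wb \<tau> \<eta> z)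
      else if fst o' \<noteq> fst i' \<and> snd o' \<noteq> snd i'
        then (if fst i' = snd i' then wd \<tau> \<eta> z else wc \<tau> \<eta> z)
      else 0)"

text \<open>Monodromy matrix entry (aux out, aux in) for R_{0L}(x_L-u)...R_{01}(x_1-u),
  with R_{01} applied first; sites given by the lists (out states, in states).\<close>

fun mono :: "complex \<Rightarrow> complex \<Rightarrow> complex \<Rightarrow> complex list \<Rightarrow> bool list \<Rightarrow> bool list
              \<Rightarrow> bool \<Rightarrow> bool \<Rightarrow> complex" where
  "mono \<tau> \<eta> u [] [] [] a' a = (if a' = a then 1 else 0)"
| "mono \<tau> \<eta> u (x # xs) (s' # ss') (s # ss) a' a =
     (\<Sum>b\<in>UNIV. mono \<tau> \<eta> u xs ss' ss a' b * Rent \<tau> \<eta> (x - u) (b, s') (a, s))"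
| "mono \<tau> \<eta> u _ _ _ a' a = 0"

definition transfer_entry :: "complex \<Rightarrow> complex \<Rightarrow> complex \<Rightarrow> complex list \<Rightarrow> bool list \<Rightarrow> bool list \<Rightarrow> complex" where
  "transfer_entry \<tau> \<eta> u xs \<sigma>' \<sigma> = (\<Sum>a\<in>UNIV. mono \<tau> \<eta> u xs \<sigma>' \<sigma> a a)"

text \<open>Vectors in (C^2)^(tensor L) are functions on bool lists of length L.
  transfer \<tau> \<eta> u xs is T_L(u | xs) with L = length xs.\<close>

definition transfer :: "complex \<Rightarrow> complex \<Rightarrow> complex \<Rightarrow> complex list \<Rightarrow> (bool list \<Rightarrow> complex) \<Rightarrow> bool list \<Rightarrow> complex" where
  "transfer \<tau> \<eta> u xs v \<sigma>' =
     (\<Sum>\<sigma>\<in>{\<sigma>. length \<sigma> = length xs}. transfer_entry \<tau> \<eta> u xs \<sigma>' \<sigma> * v \<sigma>)"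

definition singlet :: "bool \<Rightarrow> bool \<Rightarrow> complex" where
  "singlet a b = (if \<not> a \<and> b then 1 else if a \<and> \<not> b then -1 else 0)"

text \<open>v placed on the sites other than k+1, k+2 (1-based), s placed on sites k+1,k+2.\<close>
definition insert_singlet :: "nat \<Rightarrow> (bool list \<Rightarrow> complex) \<Rightarrow> bool list \<Rightarrow> complex" where
  "insert_singlet k v \<sigma> = v (take k \<sigma> @ drop (k + 2) \<sigma>) * singlet (\<sigma> ! k) (\<sigma> ! Suc k)"

end

theory Submission
  imports Defs "HOL-Analysis.Analysis"
begin


definition G :: "complex \<Rightarrow> int \<Rightarrow> complex \<Rightarrow> complex" where
  "G t j z = exp (of_real pi * \<i> * t * (of_int j)^2 + \<i> * of_int j * z)"

definition H :: "complex \<Rightarrow> int \<Rightarrow> complex \<Rightarrow> complex" where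
  "H t e z = infsum (\<lambda>j. G t j z) {j::int. j mod 2 = e}"

lemma norm_G: "norm (G t j z) = exp (- (pi * Im t) * (real_of_int j)^2 - real_of_int j * Im z)"
  unfolding G_def by (simp add: norm_exp_eq_Re algebra_simps)

lemma geom_int_summable:
  fixes q :: real assumes "0 \<le> q" "q < 1"
  shows "(\<lambda>j::int. q ^ nat \<bar>j\<bar>) summable_on UNIV"
proof -
  have U: "(UNIV::int set) = range int \<union> range (\<lambda>n. - int (Suc n))"
  proof -
    have "j \<in> range int \<union> range (\<lambda>n. - int (Suc n))" for j :: int
    proof (cases "j \<ge> 0")
      case True then show ?thesis by (metis UnI1 nonneg_int_cases rangeI)
    next
      case False
      then have "j = - int (Suc (nat (-j - 1)))" by simp
      then show ?thesis by blast
    qed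
    then show ?thesis by blast
  qed
  have gs: "summable (\<lambda>n. norm (q ^ n))" using assms by (simp add: summable_geometric)
  have s1: "(\<lambda>j::int. q ^ nat \<bar>j\<bar>) summable_on range int"
    by (subst summable_on_reindex) (use gs in \<open>auto simp: o_def intro: norm_summable_imp_summable_on\<close>)
  have gs2: "summable (\<lambda>n. norm (q ^ Suc n))" using gs by (subst summable_Suc_iff)
  have "inj (\<lambda>n. - int (Suc n))" by (auto simp: inj_def)
  then have s2: "(\<lambda>j::int. q ^ nat \<bar>j\<bar>) summable_on range (\<lambda>n. - int (Suc n))"
  proof (subst summable_on_reindex)
    have e: "(\<lambda>x. q ^ nat \<bar>- int (Suc x)\<bar>) = (\<lambda>n. q ^ Suc n)" by (rule ext) (simp add: nat_add_distrib)
    show "(\<lambda>j::int. q ^ nat \<bar>j\<bar>) \<circ> (\<lambda>n. - int (Suc n)) summable_on UNIV"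
      unfolding o_def e by (rule norm_summable_imp_summable_on[OF gs2])
  qed
  have "range int \<inter> range (\<lambda>n. - int (Suc n)) = {}" by auto
  then show ?thesis using summable_on_Un_disjoint[OF s1 s2] U by simp
qed

lemma G_abs_summable:
  assumes "Im t > 0"
  shows "(\<lambda>j. norm (G t j z)) summable_on (UNIV::int set)"
proof -
  define A where "A = pi * Im t"
  define B where "B = Im z"
  define K where "K = \<bar>B\<bar> + 1"
  have A: "A > 0" using assms by (simp add: A_def)
  have bnd: "- A * (real_of_int j)^2 - real_of_int j * B \<le> K^2/(4*A) - \<bar>real_of_int j\<bar>" for j
  proof -
    define w where "w = \<bar>real_of_int j\<bar>"
    have js: "(real_of_int j)^2 = w^2" by (simp add: w_def)
    have "- real_of_int j * B \<le> \<bar>B\<bar> * w" unfolding w_def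
      by (metis abs_ge_minus_self abs_minus_cancel abs_mult mult.commute mult_minus_left)
    moreover have "0 \<le> (K - 2*A*w)^2/(4*A)" using A by simp
    moreover have "(K - 2*A*w)^2/(4*A) = K^2/(4*A) - K*w + A*w^2" using A
      by (simp add: field_simps power2_eq_square)
    moreover have "K*w = \<bar>B\<bar>*w + w" by (simp add: K_def algebra_simps)
    ultimately have "- A * w^2 - real_of_int j * B \<le> K^2/(4*A) - w" by linarith
    then show ?thesis unfolding js w_def .
  qed
  have sg: "(\<lambda>j::int. exp (K^2/(4*A)) * exp (-1) ^ nat \<bar>j\<bar>) summable_on UNIV"
    by (rule summable_on_cmult_right, rule geom_int_summable) auto
  show ?thesis
  proof (rule summable_on_comparison_test[OF sg])
    fix j :: int
    have "exp (-1) ^ nat \<bar>j\<bar> = exp (- \<bar>real_of_int j\<bar>)"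
      by (metis exp_of_nat_mult mult_minus1_right of_nat_nat abs_ge_zero of_int_abs of_int_of_nat_eq)
    then have "exp (K^2/(4*A)) * exp (-1) ^ nat \<bar>j\<bar> = exp (K^2/(4*A) - \<bar>real_of_int j\<bar>)"
      by (simp add: exp_diff exp_minus field_simps)
    then show "norm (G t j z) \<le> exp (K^2/(4*A)) * exp (-1) ^ nat \<bar>j\<bar>"
      using bnd[of j] by (simp add: norm_G A_def B_def)
  qed simp
qed

lemma G_summable: assumes "Im t > 0" shows "(\<lambda>j. G t j z) summable_on A"
proof -
  have "(\<lambda>j. G t j z) summable_on UNIV"
    using G_abs_summable[OF assms] summable_on_iff_abs_summable_on_complex by blast
  then show ?thesis by (rule summable_on_subset_banach) simp
qed

lemma prod_summable_infsum:
  fixes f g :: "_ \<Rightarrow> complex"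
  assumes f: "f summable_on A" and g: "g summable_on B"
  shows "(\<lambda>(x,y). f x * g y) summable_on A \<times> B"
    and "infsum (\<lambda>(x,y). f x * g y) (A \<times> B) = infsum f A * infsum g B"
proof -
  have af: "(\<lambda>x. norm (f x)) summable_on A" using f summable_on_iff_abs_summable_on_complex by blast
  have ag: "(\<lambda>x. norm (g x)) summable_on B" using g summable_on_iff_abs_summable_on_complex by blast
  have "(\<lambda>p. norm ((\<lambda>(x,y). f x * g y) p)) summable_on Sigma A (\<lambda>_. B)"
    unfolding Infinite_Sum.abs_summable_on_Sigma_iff
  proof (intro conjI ballI)
    fix x assume "x \<in> A"
    show "(\<lambda>y. norm (case (x, y) of (x, y) \<Rightarrow> f x * g y)) summable_on B"
      using summable_on_cmult_right[OF ag, of "norm (f x)"] by (simp add: norm_mult)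
  next
    have "infsum (\<lambda>y. norm (case (x, y) of (x, y) \<Rightarrow> f x * g y)) B
        = norm (f x) * infsum (\<lambda>y. norm (g y)) B" for x
      by (simp add: norm_mult infsum_cmult_right')
    moreover have "(\<lambda>x. norm (norm (f x) * infsum (\<lambda>y. norm (g y)) B)) summable_on A"
      using summable_on_cmult_left[OF af, of "infsum (\<lambda>y. norm (g y)) B"]
      by (simp add: infsum_nonneg abs_mult)
    ultimately show "(\<lambda>x. norm (infsum (\<lambda>y. norm (case (x, y) of (x, y) \<Rightarrow> f x * g y)) B)) summable_on A"
      by simp
  qed
  then show S: "(\<lambda>(x,y). f x * g y) summable_on A \<times> B"
    using summable_on_iff_abs_summable_on_complex by blast
  have "infsum (\<lambda>x. infsum (\<lambda>y. (\<lambda>(x,y). f x * g y) (x,y)) B) A = infsum (\<lambda>(x,y). f x * g y) (A \<times> B)"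
    by (rule infsum_Sigma_banach) (use S in simp)
  moreover have "infsum (\<lambda>x. infsum (\<lambda>y. (\<lambda>(x,y). f x * g y) (x,y)) B) A = infsum f A * infsum g B"
    by (simp add: infsum_cmult_right' infsum_cmult_left')
  ultimately show "infsum (\<lambda>(x,y). f x * g y) (A \<times> B) = infsum f A * infsum g B" by simp
qed

lemma G_prod: "G t (p + r) a * G t (p - r) b = G (2*t) p (a+b) * G (2*t) r (a-b)"
  unfolding G_def exp_add[symmetric] by (rule arg_cong[where f=exp]) (simp add: power2_eq_square algebra_simps)

lemma H_prod:
  assumes t: "Im t > 0" and c: "c = 0 \<or> c = 1"
  shows "H t c a * H t c b = H (2*t) 0 (a+b) * H (2*t) c (a-b) + H (2*t) 1 (a+b) * H (2*t) (1-c) (a-b)"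
proof -
  define E where "E e = {j::int. j mod 2 = e}" for e
  have t2: "Im (2*t) > 0" using t by simp
  have "H t c a * H t c b = infsum (\<lambda>(M,N). G t M a * G t N b) (E c \<times> E c)"
    unfolding H_def E_def by (rule prod_summable_infsum(2)[symmetric]; rule G_summable[OF t])
  also have "\<dots> = infsum (\<lambda>(p,r). G (2*t) p (a+b) * G (2*t) r (a-b)) {(p,r). (p+r) mod 2 = c}"
  proof (rule infsum_reindex_bij_witness[where i="\<lambda>(p,r). (p+r, p-r)" and j="\<lambda>(M,N). ((M+N) div 2, (M-N) div 2)"])
    fix MN assume "MN \<in> E c \<times> E c"
    then obtain M N where MN: "MN = (M,N)" "M mod 2 = c" "N mod 2 = c" by (auto simp: E_def)
    then show "(case (case MN of (M, N) \<Rightarrow> ((M + N) div 2, (M - N) div 2)) of (p, r) \<Rightarrow> (p + r, p - r)) = MN"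
      using c by (auto; presburger)
    show "(case MN of (M, N) \<Rightarrow> ((M + N) div 2, (M - N) div 2)) \<in> {(p, r). (p + r) mod 2 = c}"
      using MN c by (auto; presburger)
    have "G (2*t) ((M + N) div 2) (a+b) * G (2*t) ((M - N) div 2) (a-b)
        = G t ((M + N) div 2 + (M - N) div 2) a * G t ((M + N) div 2 - (M - N) div 2) b"
      by (rule G_prod[symmetric])
    also have "(M + N) div 2 + (M - N) div 2 = M" using MN c by (auto; presburger)
    also have "(M + N) div 2 - (M - N) div 2 = N" using MN c by (auto; presburger)
    finally show "(case case MN of (M, N) \<Rightarrow> ((M + N) div 2, (M - N) div 2) of
          (p, r) \<Rightarrow> G (2 * t) p (a + b) * G (2 * t) r (a - b)) = (case MN of (M, N) \<Rightarrow> G t M a * G t N b)"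
      using MN by simp
  next
    fix pr assume "pr \<in> {(p, r). (p + r) mod 2 = c}"
    then obtain p r where pr: "pr = (p,r)" "(p+r) mod 2 = c" by auto
    then show "(case case pr of (p, r) \<Rightarrow> (p + r, p - r) of (M, N) \<Rightarrow> ((M + N) div 2, (M - N) div 2)) = pr"
      by auto
    show "(case pr of (p, r) \<Rightarrow> (p + r, p - r)) \<in> E c \<times> E c"
      using pr c unfolding E_def by (auto; presburger)
  qed
  also have "{(p,r). (p+r) mod 2 = c} = E 0 \<times> E c \<union> E 1 \<times> E (1-c)"
    using c unfolding E_def by (auto; presburger)
  also have "infsum (\<lambda>(p,r). G (2*t) p (a+b) * G (2*t) r (a-b)) (E 0 \<times> E c \<union> E 1 \<times> E (1-c))
      = infsum (\<lambda>(p,r). G (2*t) p (a+b) * G (2*t) r (a-b)) (E 0 \<times> E c)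
      + infsum (\<lambda>(p,r). G (2*t) p (a+b) * G (2*t) r (a-b)) (E 1 \<times> E (1-c))"
    by (rule infsum_Un_disjoint; (rule prod_summable_infsum(1); rule G_summable[OF t2])?) (auto simp: E_def)
  also have "\<dots> = H (2*t) 0 (a+b) * H (2*t) c (a-b) + H (2*t) 1 (a+b) * H (2*t) (1-c) (a-b)"
    unfolding H_def E_def by (subst prod_summable_infsum(2); (rule G_summable[OF t2])?)+ (rule refl)
  finally show ?thesis .
qed

lemma H_neg: "H t e (- z) = H t e z"
  unfolding H_def
proof (rule infsum_reindex_bij_witness[where i=uminus and j=uminus])
  fix a :: int assume "a \<in> {j. j mod 2 = e}"
  then show "- (- a) = a" "- a \<in> {j. j mod 2 = e}" by (auto; presburger)+
  show "G t (- a) z = G t a (- z)" unfolding G_def by simp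
next
  fix a :: int assume "a \<in> {j. j mod 2 = e}"
  then show "- (- a) = a" "- a \<in> {j. j mod 2 = e}" by (auto; presburger)+
qed

lemma exp_ipi_int: "exp (\<i> * of_int j * of_real pi) = (if even j then 1 else -1)"
proof -
  have "exp (\<i> * of_int j * of_real pi) = exp (of_int j * (\<i> * of_real pi))" by (simp only: mult_ac)
  also have "\<dots> = exp (\<i> * of_real pi) powi j" by (rule exp_power_int[symmetric])
  finally show ?thesis by (simp add: power_int_minus_left)
qed

lemma H_shift:
  assumes "e = 0 \<or> e = 1"
  shows "H t e (z + of_real pi) = (if e = 0 then 1 else -1) * H t e z"
proof -
  have "G t j (z + of_real pi) = (if e = 0 then 1 else -1) * G t j z" if "j mod 2 = e" for j
  proof -
    have "G t j (z + of_real pi) = G t j z * exp (\<i> * of_int j * of_real pi)"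
      unfolding G_def exp_add[symmetric] by (simp add: algebra_simps)
    also have "exp (\<i> * of_int j * of_real pi) = (if e = 0 then 1 else -1)"
      using that assms by (auto simp: exp_ipi_int; presburger)
    finally show ?thesis by simp
  qed
  then have "H t e (z + of_real pi) = infsum (\<lambda>j. (if e = 0 then 1 else -1) * G t j z) {j. j mod 2 = e}"
    unfolding H_def by (intro infsum_cong) auto
  also have "\<dots> = (if e = 0 then 1 else -1) * H t e z"
    unfolding H_def by (rule infsum_cmult_right')
  finally show ?thesis .
qed

lemma infsum_nat_suminf:
  fixes g :: "nat \<Rightarrow> complex"
  assumes "g summable_on UNIV"
  shows "infsum g UNIV = suminf g" "summable g"
proof -
  have "g sums infsum g UNIV" using assms by (intro has_sum_imp_sums) (rule has_sum_infsum)
  then show "infsum g UNIV = suminf g" "summable g" by (auto simp: sums_iff)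
qed

lemma infsum_image_suminf:
  fixes f :: "int \<Rightarrow> complex"
  assumes "f summable_on UNIV" "inj h"
  shows "infsum f (range h) = suminf (\<lambda>n. f (h n))" "summable (\<lambda>n. f (h n))"
proof -
  have s: "(f \<circ> h) summable_on UNIV"
    using summable_on_reindex[OF assms(2)] summable_on_subset_banach[OF assms(1)] by auto
  show "infsum f (range h) = suminf (\<lambda>n. f (h n))"
    using infsum_reindex[OF assms(2), of f] infsum_nat_suminf(1)[OF s] by (simp add: o_def)
  show "summable (\<lambda>n. f (h n))" using infsum_nat_suminf(2)[OF s] by (simp add: o_def)
qed


lemma even_split:
  fixes f :: "int \<Rightarrow> complex"
  assumes f: "f summable_on UNIV"
  shows "infsum f {j. j mod 2 = 0} = f 0 + suminf (\<lambda>n. f (2 * int (Suc n)) + f (- (2 * int (Suc n))))"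
proof -
  define h1 where "h1 n = 2 * int (Suc n)" for n
  define h2 where "h2 n = - (2 * int (Suc n))" for n
  have i1: "inj h1" and i2: "inj h2" by (auto simp: inj_def h1_def h2_def)
  have eq: "{j::int. j mod 2 = 0} = {0} \<union> (range h1 \<union> range h2)"
  proof (rule set_eqI, rule iffI)
    fix j :: int assume "j \<in> {j. j mod 2 = 0}"
    then obtain k where k: "j = 2 * k" by auto
    show "j \<in> {0} \<union> (range h1 \<union> range h2)"
    proof (cases "k > 0")
      case True then have "j = h1 (nat (k - 1))" using k by (simp add: h1_def)
      then show ?thesis by blast
    next
      case False
      show ?thesis
      proof (cases "k = 0")
        case True then show ?thesis using k by simp
      next
        case False
        then have "j = h2 (nat (- k - 1))" using k \<open>\<not> k > 0\<close> by (simp add: h2_def)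
        then show ?thesis by blast
      qed
    qed
  qed (auto simp: h1_def h2_def)
  have sm: "f summable_on X" for X using f by (rule summable_on_subset_banach) simp
  have "infsum f {j. j mod 2 = 0} = infsum f {0} + (infsum f (range h1) + infsum f (range h2))"
  proof -
    have d1: "range h1 \<inter> range h2 = {}" by (auto simp: h1_def h2_def)
    have d2: "{0} \<inter> (range h1 \<union> range h2) = {}" by (auto simp: h1_def h2_def)
    show ?thesis unfolding eq
      using infsum_Un_disjoint[OF sm sm d2] infsum_Un_disjoint[OF sm sm d1] by simp
  qed
  also have "\<dots> = f 0 + (suminf (\<lambda>n. f (h1 n)) + suminf (\<lambda>n. f (h2 n)))"
    using infsum_image_suminf(1)[OF f i1] infsum_image_suminf(1)[OF f i2] by simp
  also have "\<dots> = f 0 + suminf (\<lambda>n. f (h1 n) + f (h2 n))"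
    using suminf_add[OF infsum_image_suminf(2)[OF f i1] infsum_image_suminf(2)[OF f i2]] by simp
  finally show ?thesis by (simp add: h1_def h2_def)
qed


lemma odd_split:
  fixes f :: "int \<Rightarrow> complex"
  assumes f: "f summable_on UNIV"
  shows "infsum f {j. j mod 2 = 1} = suminf (\<lambda>n. f (2 * int n + 1) + f (- (2 * int n + 1)))"
proof -
  define h1 where "h1 n = 2 * int n + 1" for n
  define h2 where "h2 n = - (2 * int n + 1)" for n
  have i1: "inj h1" and i2: "inj h2" by (auto simp: inj_def h1_def h2_def)
  have eq: "{j::int. j mod 2 = 1} = range h1 \<union> range h2"
  proof (rule set_eqI, rule iffI)
    fix j :: int assume "j \<in> {j. j mod 2 = 1}"
    then have jm: "j mod 2 = 1" by simp
    have "2 * (j div 2) + j mod 2 = j" by (rule mult_div_mod_eq)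
    then have k: "j = 2 * (j div 2) + 1" using jm by simp
    define k where "k = j div 2"
    have k: "j = 2 * k + 1" using k by (simp add: k_def)
    show "j \<in> range h1 \<union> range h2"
    proof (cases "k \<ge> 0")
      case True then have "j = h1 (nat k)" using k by (simp add: h1_def)
      then show ?thesis by blast
    next
      case False
      then have "j = h2 (nat (- k - 1))" using k by (simp add: h2_def)
      then show ?thesis by blast
    qed
  next
    fix j assume "j \<in> range h1 \<union> range h2"
    then obtain n where "j = 2 * int n + 1 \<or> j = - (2 * int n + 1)" by (auto simp: h1_def h2_def)
    then show "j \<in> {j. j mod 2 = 1}" by (elim disjE; simp; presburger)
  qed
  have sm: "f summable_on X" for X using f by (rule summable_on_subset_banach) simp
  have "infsum f {j. j mod 2 = 1} = infsum f (range h1) + infsum f (range h2)"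
  proof -
    have "h1 n \<noteq> h2 m" for n m unfolding h1_def h2_def by linarith
    then have d1: "range h1 \<inter> range h2 = {}" by auto
    show ?thesis unfolding eq using infsum_Un_disjoint[OF sm sm d1] by simp
  qed
  also have "\<dots> = suminf (\<lambda>n. f (h1 n)) + suminf (\<lambda>n. f (h2 n))"
    using infsum_image_suminf(1)[OF f i1] infsum_image_suminf(1)[OF f i2] by simp
  also have "\<dots> = suminf (\<lambda>n. f (h1 n) + f (h2 n))"
    using suminf_add[OF infsum_image_suminf(2)[OF f i1] infsum_image_suminf(2)[OF f i2]] by simp
  finally show ?thesis by (simp add: h1_def h2_def)
qed

lemma G4:
  "G (\<tau>/2) (2 * int m) (z + of_real pi/2) + G (\<tau>/2) (- (2 * int m)) (z + of_real pi/2)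
   = 2 * ((-1) ^ m * exp (2 * of_real pi * \<i> * \<tau> * (of_nat m)^2) * cos (2 * of_nat m * z))"
proof -
  have m1: "(-1::complex) ^ m = exp (of_nat m * (\<i> * of_real pi))" by (simp add: exp_of_nat_mult)
  have m2: "(-1::complex) ^ m = exp (of_nat m * (- (\<i> * of_real pi)))"
    by (simp add: exp_of_nat_mult exp_minus flip: power_inverse)
  have a: "G (\<tau>/2) (2 * int m) (z + of_real pi/2)
      = exp (2 * of_real pi * \<i> * \<tau> * (of_nat m)^2) * exp (\<i> * (2 * of_nat m * z)) * (-1) ^ m"
    unfolding G_def m1 exp_add[symmetric] by (rule arg_cong[where f=exp]) (simp add: algebra_simps power2_eq_square)
  have b: "G (\<tau>/2) (- (2 * int m)) (z + of_real pi/2)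
      = exp (2 * of_real pi * \<i> * \<tau> * (of_nat m)^2) * exp (- (\<i> * (2 * of_nat m * z))) * (-1) ^ m"
    unfolding G_def m2 exp_add[symmetric] by (rule arg_cong[where f=exp]) (simp add: algebra_simps power2_eq_square)
  show ?thesis unfolding a b cos_exp_eq by (simp add: algebra_simps)
qed

lemma G1:
  "G (\<tau>/2) (2 * int n + 1) (z + of_real pi/2) + G (\<tau>/2) (- (2 * int n + 1)) (z + of_real pi/2)
   = - 2 * ((-1) ^ n * exp (2 * of_real pi * \<i> * \<tau> * (of_nat n + 1/2)^2) * sin ((2 * of_nat n + 1) * z))"
proof -
  have ih: "exp (\<i> * (of_real pi / 2)) = \<i>"
    using cis_pi_half cis_conv_exp by (metis of_real_divide of_real_numeral)
  have ih2: "exp (- (\<i> * (of_real pi / 2))) = - \<i>" unfolding exp_minus ih by simp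
  have m1: "\<i> * (-1::complex) ^ n = exp (\<i> * (of_real pi / 2) + of_nat n * (\<i> * of_real pi))"
    unfolding exp_add ih by (simp add: exp_of_nat_mult)
  have m2: "- \<i> * (-1::complex) ^ n = exp (- (\<i> * (of_real pi / 2)) + of_nat n * (- (\<i> * of_real pi)))"
    unfolding exp_add ih2 by (simp add: exp_of_nat_mult exp_minus flip: power_inverse)
  have a: "G (\<tau>/2) (2 * int n + 1) (z + of_real pi/2)
      = exp (2 * of_real pi * \<i> * \<tau> * (of_nat n + 1/2)^2) * exp (\<i> * ((2 * of_nat n + 1) * z)) * (\<i> * (-1) ^ n)"
    unfolding G_def m1 exp_add[symmetric] by (rule arg_cong[where f=exp]) (simp add: algebra_simps power2_eq_square)
  have b: "G (\<tau>/2) (- (2 * int n + 1)) (z + of_real pi/2)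
      = exp (2 * of_real pi * \<i> * \<tau> * (of_nat n + 1/2)^2) * exp (- (\<i> * ((2 * of_nat n + 1) * z))) * (- \<i> * (-1) ^ n)"
    unfolding G_def m2 exp_add[symmetric] by (rule arg_cong[where f=exp]) (simp add: algebra_simps power2_eq_square)
  have gen: "E * X * (\<i> * s) + E * Y * (- \<i> * s) = - 2 * (s * E * ((X - Y) / (2 * \<i>)))" for E X Y s :: complex
    by (simp add: field_simps)
  show ?thesis unfolding a b sin_exp_eq by (rule gen)
qed

lemma theta4_H:
  assumes "Im \<tau> > 0"
  shows "theta4 \<tau> z = H (\<tau>/2) 0 (z + of_real pi/2)"
proof -
  define f where "f j = G (\<tau>/2) j (z + of_real pi/2)" for j
  define T where "T n = (-1) ^ (Suc n) * exp (2 * of_real pi * \<i> * \<tau> * (of_nat (Suc n))^2) * cos (2 * of_nat (Suc n) * z)" for n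
  have t: "Im (\<tau>/2) > 0" using assms by simp
  have f: "f summable_on UNIV" unfolding f_def by (rule G_summable[OF t])
  have i1: "inj (\<lambda>n. 2 * int (Suc n))" and i2: "inj (\<lambda>n. - (2 * int (Suc n)))" by (auto simp: inj_def)
  have fT: "f (2 * int (Suc n)) + f (- (2 * int (Suc n))) = 2 * T n" for n
    unfolding f_def T_def by (rule G4)
  have "summable (\<lambda>n. f (2 * int (Suc n)) + f (- (2 * int (Suc n))))"
    by (rule summable_add; rule infsum_image_suminf(2)[OF f]) (fact i1, fact i2)
  then have s2: "summable (\<lambda>n. 2 * T n)" unfolding fT .
  then have sT: "summable T" by simp
  have "H (\<tau>/2) 0 (z + of_real pi/2) = f 0 + suminf (\<lambda>n. 2 * T n)"
    unfolding H_def f_def[symmetric] even_split[OF f] fT ..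
  also have "f 0 = 1" unfolding f_def G_def by simp
  also have "suminf (\<lambda>n. 2 * T n) = 2 * suminf T" by (rule suminf_mult[OF sT])
  finally show ?thesis unfolding theta4_def T_def by simp
qed

lemma theta1_H:
  assumes "Im \<tau> > 0"
  shows "theta1 \<tau> z = - H (\<tau>/2) 1 (z + of_real pi/2)"
proof -
  define f where "f j = G (\<tau>/2) j (z + of_real pi/2)" for j
  define T where "T n = (-1) ^ n * exp (2 * of_real pi * \<i> * \<tau> * (of_nat n + 1/2)^2) * sin ((2 * of_nat n + 1) * z)" for n
  have t: "Im (\<tau>/2) > 0" using assms by simp
  have f: "f summable_on UNIV" unfolding f_def by (rule G_summable[OF t])
  have i1: "inj (\<lambda>n. 2 * int n + 1)" and i2: "inj (\<lambda>n. - (2 * int n + 1))" by (auto simp: inj_def)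
  have fT: "f (2 * int n + 1) + f (- (2 * int n + 1)) = - 2 * T n" for n
    unfolding f_def T_def by (rule G1)
  have "summable (\<lambda>n. f (2 * int n + 1) + f (- (2 * int n + 1)))"
    by (rule summable_add; rule infsum_image_suminf(2)[OF f]) (fact i1, fact i2)
  then have s2: "summable (\<lambda>n. - 2 * T n)" unfolding fT .
  then have sT: "summable T" using summable_cmult_iff[of "-2" T] by simp
  have "H (\<tau>/2) 1 (z + of_real pi/2) = suminf (\<lambda>n. - 2 * T n)"
    unfolding H_def f_def[symmetric] odd_split[OF f] fT ..
  also have "suminf (\<lambda>n. - 2 * T n) = - 2 * suminf T" by (rule suminf_mult[OF sT])
  finally show ?thesis unfolding theta1_def T_def by simp
qed

lemma prod1:
  assumes "Im \<tau> > 0" "a + b = s" "a - b = d"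
  shows "theta1 \<tau> a * theta1 \<tau> b = H \<tau> 0 s * H \<tau> 1 d - H \<tau> 1 s * H \<tau> 0 d"
proof -
  have t: "Im (\<tau>/2) > 0" using assms by simp
  have e1: "(a + of_real pi/2) + (b + of_real pi/2) = s + of_real pi" using assms(2) by simp
  have e2: "(a + of_real pi/2) - (b + of_real pi/2) = d" using assms(3) by simp
  have "theta1 \<tau> a * theta1 \<tau> b = H (\<tau>/2) 1 (a + of_real pi/2) * H (\<tau>/2) 1 (b + of_real pi/2)"
    using theta1_H[OF assms(1)] by simp
  also have "\<dots> = H \<tau> 0 (s + of_real pi) * H \<tau> 1 d + H \<tau> 1 (s + of_real pi) * H \<tau> 0 d"
    using H_prod[OF t, of 1 "a + of_real pi/2" "b + of_real pi/2", unfolded e1 e2] by simp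
  also have "\<dots> = H \<tau> 0 s * H \<tau> 1 d - H \<tau> 1 s * H \<tau> 0 d"
    using H_shift[of 0] H_shift[of 1] by simp
  finally show ?thesis .
qed

lemma prod4:
  assumes "Im \<tau> > 0" "a + b = s" "a - b = d"
  shows "theta4 \<tau> a * theta4 \<tau> b = H \<tau> 0 s * H \<tau> 0 d - H \<tau> 1 s * H \<tau> 1 d"
proof -
  have t: "Im (\<tau>/2) > 0" using assms by simp
  have e1: "(a + of_real pi/2) + (b + of_real pi/2) = s + of_real pi" using assms(2) by simp
  have e2: "(a + of_real pi/2) - (b + of_real pi/2) = d" using assms(3) by simp
  have "theta4 \<tau> a * theta4 \<tau> b = H (\<tau>/2) 0 (a + of_real pi/2) * H (\<tau>/2) 0 (b + of_real pi/2)"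
    using theta4_H[OF assms(1)] by simp
  also have "\<dots> = H \<tau> 0 (s + of_real pi) * H \<tau> 0 d + H \<tau> 1 (s + of_real pi) * H \<tau> 1 d"
    using H_prod[OF t, of 0 "a + of_real pi/2" "b + of_real pi/2", unfolded e1 e2] by simp
  also have "\<dots> = H \<tau> 0 s * H \<tau> 0 d - H \<tau> 1 s * H \<tau> 1 d"
    using H_shift[of 0] H_shift[of 1] by simp
  finally show ?thesis .
qed

lemma K_eta:
  assumes "\<eta> = of_real (pi/3)" "e = 0 \<or> e = 1"
  shows "H \<tau> e (- 4 * \<eta>) = H \<tau> e (2 * \<eta>)" "H \<tau> e (4 * \<eta>) = H \<tau> e (2 * \<eta>)"
    "H \<tau> e (- 2 * \<eta>) = H \<tau> e (2 * \<eta>)"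
proof -
  have eq: "2 * \<eta> = (- 4 * \<eta> + of_real pi) + of_real pi" using assms(1) by (simp add: field_simps)
  have "H \<tau> e (2 * \<eta>) = H \<tau> e ((- 4 * \<eta> + of_real pi) + of_real pi)" by (subst eq) (rule refl)
  also have "\<dots> = (if e = 0 then 1 else -1) * ((if e = 0 then 1 else -1) * H \<tau> e (- 4 * \<eta>))"
    by (simp only: H_shift[OF assms(2)])
  finally have "H \<tau> e (2 * \<eta>) = H \<tau> e (- 4 * \<eta>)" by simp
  then show a: "H \<tau> e (- 4 * \<eta>) = H \<tau> e (2 * \<eta>)" by simp
  show "H \<tau> e (4 * \<eta>) = H \<tau> e (2 * \<eta>)" using H_neg[of \<tau> e "- 4 * \<eta>"] a by simp
  show "H \<tau> e (- 2 * \<eta>) = H \<tau> e (2 * \<eta>)" using H_neg[of \<tau> e "2 * \<eta>"] by simp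
qed

lemma E12:
  assumes t: "Im \<tau> > 0" and eta: "\<eta> = of_real (pi/3)"
  shows "wa \<tau> \<eta> y * wb \<tau> \<eta> (y + 2*\<eta>) - wc \<tau> \<eta> y * wc \<tau> \<eta> (y + 2*\<eta>)
           = wr \<tau> \<eta> y * wr \<tau> \<eta> (y + 2*\<eta>)" (is ?A)
    and "wb \<tau> \<eta> y * wa \<tau> \<eta> (y + 2*\<eta>) - wd \<tau> \<eta> y * wd \<tau> \<eta> (y + 2*\<eta>)
           = wr \<tau> \<eta> y * wr \<tau> \<eta> (y + 2*\<eta>)" (is ?B)
proof -
  define R0 where "R0 = H \<tau> 0 (2*y + 4*\<eta>)"
  define R1 where "R1 = H \<tau> 1 (2*y + 4*\<eta>)"
  define S0 where "S0 = H \<tau> 0 (2*\<eta>)"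
  define S1 where "S1 = H \<tau> 1 (2*\<eta>)"
  define k0 where "k0 = H \<tau> 0 0"
  define k1 where "k1 = H \<tau> 1 0"
  note K = K_eta[OF eta, of 0] K_eta[OF eta, of 1]
  have p1: "theta4 \<tau> (2*\<eta>) * theta4 \<tau> (2*\<eta>) = S0*k0 - S1*k1"
    using prod4[OF t, of "2*\<eta>" "2*\<eta>" "4*\<eta>" 0] K by (simp add: S0_def S1_def k0_def k1_def)
  have p2: "theta1 \<tau> (2*\<eta>) * theta1 \<tau> (2*\<eta>) = S0*k1 - S1*k0"
    using prod1[OF t, of "2*\<eta>" "2*\<eta>" "4*\<eta>" 0] K by (simp add: S0_def S1_def k0_def k1_def)
  have p3: "theta4 \<tau> y * theta4 \<tau> (y + 2*\<eta> + 2*\<eta>) = R0*S0 - R1*S1"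
    using prod4[OF t, of y "y + 2*\<eta> + 2*\<eta>" "2*y + 4*\<eta>" "- 4*\<eta>"] K
    by (simp add: S0_def S1_def R0_def R1_def)
  have p4: "theta1 \<tau> y * theta1 \<tau> (y + 2*\<eta> + 2*\<eta>) = R0*S1 - R1*S0"
    using prod1[OF t, of y "y + 2*\<eta> + 2*\<eta>" "2*y + 4*\<eta>" "- 4*\<eta>"] K
    by (simp add: S0_def S1_def R0_def R1_def)
  have p5: "theta1 \<tau> (y + 2*\<eta>) * theta1 \<tau> (y + 2*\<eta>) = R0*k1 - R1*k0"
    using prod1[OF t, of "y + 2*\<eta>" "y + 2*\<eta>" "2*y + 4*\<eta>" 0]
    by (simp add: R0_def R1_def k0_def k1_def)
  have p6: "theta4 \<tau> (y + 2*\<eta>) * theta4 \<tau> (y + 2*\<eta>) = R0*k0 - R1*k1"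
    using prod4[OF t, of "y + 2*\<eta>" "y + 2*\<eta>" "2*y + 4*\<eta>" 0]
    by (simp add: R0_def R1_def k0_def k1_def)
  have p7: "theta4 \<tau> 0 * theta4 \<tau> 0 = k0*k0 - k1*k1"
    using prod4[OF t, of 0 0 0 0] by (simp add: k0_def k1_def)
  have p8: "theta1 \<tau> (y + \<eta>) * theta1 \<tau> (y + 2*\<eta> + \<eta>) = R0*S1 - R1*S0"
    using prod1[OF t, of "y + \<eta>" "y + 2*\<eta> + \<eta>" "2*y + 4*\<eta>" "- 2*\<eta>"] K
    by (simp add: S0_def S1_def R0_def R1_def)
  have p9: "theta4 \<tau> (y + \<eta>) * theta4 \<tau> (y + 2*\<eta> + \<eta>) = R0*S0 - R1*S1"
    using prod4[OF t, of "y + \<eta>" "y + 2*\<eta> + \<eta>" "2*y + 4*\<eta>" "- 2*\<eta>"] K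
    by (simp add: S0_def S1_def R0_def R1_def)
  have rhs: "wr \<tau> \<eta> y * wr \<tau> \<eta> (y + 2*\<eta>) = (theta4 \<tau> 0 * theta4 \<tau> 0)
     * (theta1 \<tau> (y + \<eta>) * theta1 \<tau> (y + 2*\<eta> + \<eta>)) * (theta4 \<tau> (y + \<eta>) * theta4 \<tau> (y + 2*\<eta> + \<eta>))"
    unfolding wr_def by (simp only: mult_ac)
  have lA: "wa \<tau> \<eta> y * wb \<tau> \<eta> (y + 2*\<eta>) - wc \<tau> \<eta> y * wc \<tau> \<eta> (y + 2*\<eta>)
    = (theta4 \<tau> (2*\<eta>) * theta4 \<tau> (2*\<eta>)) * (theta4 \<tau> y * theta4 \<tau> (y + 2*\<eta> + 2*\<eta>))
       * (theta1 \<tau> (y + 2*\<eta>) * theta1 \<tau> (y + 2*\<eta>))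
     - (theta1 \<tau> (2*\<eta>) * theta1 \<tau> (2*\<eta>)) * (theta4 \<tau> y * theta4 \<tau> (y + 2*\<eta> + 2*\<eta>))
       * (theta4 \<tau> (y + 2*\<eta>) * theta4 \<tau> (y + 2*\<eta>))"
    unfolding wa_def wb_def wc_def by (simp only: mult_ac)
  have lB: "wb \<tau> \<eta> y * wa \<tau> \<eta> (y + 2*\<eta>) - wd \<tau> \<eta> y * wd \<tau> \<eta> (y + 2*\<eta>)
    = (theta4 \<tau> (2*\<eta>) * theta4 \<tau> (2*\<eta>)) * (theta1 \<tau> y * theta1 \<tau> (y + 2*\<eta> + 2*\<eta>))
       * (theta4 \<tau> (y + 2*\<eta>) * theta4 \<tau> (y + 2*\<eta>))
     - (theta1 \<tau> (2*\<eta>) * theta1 \<tau> (2*\<eta>)) * (theta1 \<tau> y * theta1 \<tau> (y + 2*\<eta> + 2*\<eta>))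
       * (theta1 \<tau> (y + 2*\<eta>) * theta1 \<tau> (y + 2*\<eta>))"
    unfolding wa_def wb_def wd_def by (simp only: mult_ac)
  show ?A unfolding lA rhs p1 p2 p3 p5 p6 p7 p8 p9 by algebra
  show ?B unfolding lB rhs p1 p2 p4 p5 p6 p7 p8 p9 by algebra
qed



definition Phi :: "complex \<Rightarrow> complex \<Rightarrow> complex \<Rightarrow> complex list \<Rightarrow> bool list \<Rightarrow> bool \<Rightarrow> bool \<Rightarrow> (bool list \<Rightarrow> complex) \<Rightarrow> complex" where
  "Phi \<tau> \<eta> u xs \<sigma>' a' a V = (\<Sum>\<sigma>\<in>{\<sigma>. length \<sigma> = length xs}. mono \<tau> \<eta> u xs \<sigma>' \<sigma> a' a * V \<sigma>)"

lemma sum_len_Suc: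
  "(\<Sum>\<sigma>\<in>{\<sigma>::bool list. length \<sigma> = Suc n}. f \<sigma>) = (\<Sum>s\<in>UNIV. \<Sum>\<rho>\<in>{\<rho>. length \<rho> = n}. f (s # \<rho>))"
proof -
  have eq: "{\<sigma>::bool list. length \<sigma> = Suc n} = (\<lambda>(s,\<rho>). s # \<rho>) ` (UNIV \<times> {\<rho>. length \<rho> = n})"
  proof (rule set_eqI, rule iffI)
    fix \<sigma> :: "bool list" assume "\<sigma> \<in> {\<sigma>. length \<sigma> = Suc n}"
    then obtain s \<rho> where "\<sigma> = s # \<rho>" "length \<rho> = n" by (auto simp: length_Suc_conv)
    then show "\<sigma> \<in> (\<lambda>(s,\<rho>). s # \<rho>) ` (UNIV \<times> {\<rho>. length \<rho> = n})" by force
  qed auto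
  have inj: "inj_on (\<lambda>(s,\<rho>). s # \<rho>) (UNIV \<times> {\<rho>::bool list. length \<rho> = n})"
    by (auto simp: inj_on_def)
  show ?thesis unfolding eq sum.reindex[OF inj]
    by (simp add: sum.cartesian_product split_def)
qed

lemma Phi_Cons:
  "Phi \<tau> \<eta> u (p # xs) (s' # \<rho>') a' a V
   = (\<Sum>b\<in>UNIV. \<Sum>s\<in>UNIV. Rent \<tau> \<eta> (p - u) (b, s') (a, s) * Phi \<tau> \<eta> u xs \<rho>' a' b (\<lambda>\<rho>. V (s # \<rho>)))"
proof -
  have "Phi \<tau> \<eta> u (p # xs) (s' # \<rho>') a' a V
     = (\<Sum>s\<in>UNIV. \<Sum>\<rho>\<in>{\<rho>. length \<rho> = length xs}. \<Sum>b\<in>UNIV.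
          Rent \<tau> \<eta> (p - u) (b, s') (a, s) * (mono \<tau> \<eta> u xs \<rho>' \<rho> a' b * V (s # \<rho>)))"
    unfolding Phi_def by (simp add: sum_len_Suc sum_distrib_right sum_distrib_left mult_ac)
  also have "\<dots> = (\<Sum>s\<in>UNIV. \<Sum>b\<in>UNIV. \<Sum>\<rho>\<in>{\<rho>. length \<rho> = length xs}.
          Rent \<tau> \<eta> (p - u) (b, s') (a, s) * (mono \<tau> \<eta> u xs \<rho>' \<rho> a' b * V (s # \<rho>)))"
    by (rule sum.cong[OF refl], rule sum.swap)
  also have "\<dots> = (\<Sum>b\<in>UNIV. \<Sum>s\<in>UNIV. \<Sum>\<rho>\<in>{\<rho>. length \<rho> = length xs}.
          Rent \<tau> \<eta> (p - u) (b, s') (a, s) * (mono \<tau> \<eta> u xs \<rho>' \<rho> a' b * V (s # \<rho>)))"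
    by (rule sum.swap)
  finally show ?thesis unfolding Phi_def by (simp add: sum_distrib_left)
qed

lemma Phi_scale: "Phi \<tau> \<eta> u xs \<sigma>' a' a (\<lambda>\<rho>. v \<rho> * c) = c * Phi \<tau> \<eta> u xs \<sigma>' a' a v"
  unfolding Phi_def by (simp add: sum_distrib_left mult_ac)

lemma transfer_Phi: "transfer \<tau> \<eta> u xs V \<sigma>' = (\<Sum>a\<in>UNIV. Phi \<tau> \<eta> u xs \<sigma>' a a V)"
  unfolding transfer_def transfer_entry_def Phi_def sum_distrib_right by (rule sum.swap)

lemma ins_Cons: "(\<lambda>\<rho>. insert_singlet (Suc k) v (s # \<rho>)) = insert_singlet k (\<lambda>\<sigma>. v (s # \<sigma>))"
  unfolding insert_singlet_def by (rule ext) simp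

lemma local_gen:
  assumes E1: "wa \<tau> \<eta> y * wb \<tau> \<eta> z - wc \<tau> \<eta> y * wc \<tau> \<eta> z = K"
    and E2: "wb \<tau> \<eta> y * wa \<tau> \<eta> z - wd \<tau> \<eta> y * wd \<tau> \<eta> z = K"
    and T1: "wa \<tau> \<eta> y * wc \<tau> \<eta> z = wc \<tau> \<eta> y * wb \<tau> \<eta> z"
    and T2: "wd \<tau> \<eta> y * wa \<tau> \<eta> z = wb \<tau> \<eta> y * wd \<tau> \<eta> z"
  shows "(\<Sum>b\<in>UNIV. \<Sum>s1\<in>UNIV. \<Sum>s2\<in>UNIV. Rent \<tau> \<eta> y (b, t1) (a, s1) * Rent \<tau> \<eta> z (c, t2) (b, s2) * singlet s1 s2)
         = (if c = a then K else 0) * singlet t1 t2"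
  using E1 E2 T1 T2
  by (cases t1; cases t2; cases a; cases c) (simp_all add: UNIV_bool Rent_def singlet_def algebra_simps)

lemma key:
  assumes loc: "\<And>t1 t2 a c. (\<Sum>b\<in>UNIV. \<Sum>s1\<in>UNIV. \<Sum>s2\<in>UNIV. Rent \<tau> \<eta> (x - u) (b, t1) (a, s1)
         * Rent \<tau> \<eta> (x' - u) (c, t2) (b, s2) * singlet s1 s2) = (if c = a then K else 0) * singlet t1 t2"
  shows "length \<sigma>1 = length pre \<Longrightarrow>
    Phi \<tau> \<eta> u (pre @ x # x' # post) (\<sigma>1 @ t1 # t2 # \<sigma>2) a' a (insert_singlet (length pre) v)
    = K * singlet t1 t2 * Phi \<tau> \<eta> u (pre @ post) (\<sigma>1 @ \<sigma>2) a' a v"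
proof (induction pre arbitrary: \<sigma>1 v a)
  case Nil
  then have s1: "\<sigma>1 = []" by simp
  define P where "P c = Phi \<tau> \<eta> u post \<sigma>2 a' c v" for c
  have ins0: "(\<lambda>\<rho>. insert_singlet 0 v (s1 # s2 # \<rho>)) = (\<lambda>\<rho>. v \<rho> * singlet s1 s2)" for s1 s2
    unfolding insert_singlet_def by simp
  have "Phi \<tau> \<eta> u (x # x' # post) (t1 # t2 # \<sigma>2) a' a (insert_singlet 0 v)
     = (\<Sum>b\<in>UNIV. \<Sum>s1\<in>UNIV. Rent \<tau> \<eta> (x - u) (b, t1) (a, s1) *
         (\<Sum>c\<in>UNIV. \<Sum>s2\<in>UNIV. Rent \<tau> \<eta> (x' - u) (c, t2) (b, s2) * (singlet s1 s2 * P c)))"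
    unfolding Phi_Cons ins0 Phi_scale P_def ..
  also have "\<dots> = (\<Sum>c\<in>UNIV. P c * (\<Sum>b\<in>UNIV. \<Sum>s1\<in>UNIV. \<Sum>s2\<in>UNIV. Rent \<tau> \<eta> (x - u) (b, t1) (a, s1)
         * Rent \<tau> \<eta> (x' - u) (c, t2) (b, s2) * singlet s1 s2))"
    by (simp add: UNIV_bool algebra_simps)
  also have "\<dots> = (\<Sum>c\<in>UNIV. P c * ((if c = a then K else 0) * singlet t1 t2))"
    unfolding loc ..
  also have "\<dots> = K * singlet t1 t2 * P a"
    by (cases a) (simp_all add: UNIV_bool)
  finally show ?case using s1 by (simp add: P_def)
next
  case (Cons p pre)
  then obtain s' \<rho>1 where s1: "\<sigma>1 = s' # \<rho>1" and l: "length \<rho>1 = length pre"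
    by (cases \<sigma>1) auto
  have "Phi \<tau> \<eta> u ((p # pre) @ x # x' # post) (\<sigma>1 @ t1 # t2 # \<sigma>2) a' a (insert_singlet (length (p # pre)) v)
     = (\<Sum>b\<in>UNIV. \<Sum>s\<in>UNIV. Rent \<tau> \<eta> (p - u) (b, s') (a, s) *
          Phi \<tau> \<eta> u (pre @ x # x' # post) (\<rho>1 @ t1 # t2 # \<sigma>2) a' b (insert_singlet (length pre) (\<lambda>\<sigma>. v (s # \<sigma>))))"
    unfolding s1 by (simp add: Phi_Cons ins_Cons)
  also have "\<dots> = (\<Sum>b\<in>UNIV. \<Sum>s\<in>UNIV. Rent \<tau> \<eta> (p - u) (b, s') (a, s) *
          (K * singlet t1 t2 * Phi \<tau> \<eta> u (pre @ post) (\<rho>1 @ \<sigma>2) a' b (\<lambda>\<sigma>. v (s # \<sigma>))))"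
    using Cons.IH[OF l] by simp
  also have "\<dots> = K * singlet t1 t2 * Phi \<tau> \<eta> u ((p # pre) @ post) (\<sigma>1 @ \<sigma>2) a' a v"
    unfolding s1 by (simp add: Phi_Cons sum_distrib_left mult_ac)
  finally show ?case .
qed

lemma main_comb:
  assumes loc: "\<And>t1 t2 a c. (\<Sum>b\<in>UNIV. \<Sum>s1\<in>UNIV. \<Sum>s2\<in>UNIV. Rent \<tau> \<eta> (x - u) (b, t1) (a, s1)
         * Rent \<tau> \<eta> (x' - u) (c, t2) (b, s2) * singlet s1 s2) = (if c = a then K else 0) * singlet t1 t2"
    and len: "length \<sigma> = length pre + length post + 2"
  shows "transfer \<tau> \<eta> u (pre @ [x, x'] @ post) (insert_singlet (length pre) v) \<sigma>
         = K * insert_singlet (length pre) (transfer \<tau> \<eta> u (pre @ post) v) \<sigma>"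
proof -
  define k where "k = length pre"
  define \<sigma>1 where "\<sigma>1 = take k \<sigma>"
  define \<sigma>2 where "\<sigma>2 = drop (k + 2) \<sigma>"
  define t1 where "t1 = \<sigma> ! k"
  define t2 where "t2 = \<sigma> ! Suc k"
  have l1: "length \<sigma>1 = length pre" using len by (simp add: \<sigma>1_def k_def)
  have dec: "\<sigma> = \<sigma>1 @ t1 # t2 # \<sigma>2"
  proof -
    have "drop k \<sigma> = t1 # drop (Suc k) \<sigma>" unfolding t1_def using len k_def by (simp add: Cons_nth_drop_Suc)
    moreover have "drop (Suc k) \<sigma> = t2 # \<sigma>2" unfolding t2_def \<sigma>2_def using len k_def
      by (simp add: Cons_nth_drop_Suc)
    ultimately show ?thesis unfolding \<sigma>1_def by (metis append_take_drop_id)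
  qed
  have "transfer \<tau> \<eta> u (pre @ [x, x'] @ post) (insert_singlet (length pre) v) \<sigma>
      = (\<Sum>a\<in>UNIV. Phi \<tau> \<eta> u (pre @ x # x' # post) (\<sigma>1 @ t1 # t2 # \<sigma>2) a a (insert_singlet (length pre) v))"
    unfolding transfer_Phi by (subst dec) simp
  also have "\<dots> = (\<Sum>a\<in>UNIV. K * singlet t1 t2 * Phi \<tau> \<eta> u (pre @ post) (\<sigma>1 @ \<sigma>2) a a v)"
    using key[OF loc l1] by simp
  also have "\<dots> = K * insert_singlet (length pre) (transfer \<tau> \<eta> u (pre @ post) v) \<sigma>"
    unfolding insert_singlet_def transfer_Phi
    by (simp add: \<sigma>1_def \<sigma>2_def t1_def t2_def k_def mult_ac sum_distrib_left)
  finally show ?thesis .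
qed


theorem mainTheorem8:
  fixes \<tau> u x :: complex and pre post :: "complex list" and v :: "bool list \<Rightarrow> complex"
  assumes "Im \<tau> > 0"
    and "length pre + length post + 2 \<ge> 3"
  shows "\<forall>\<sigma>. length \<sigma> = length pre + length post + 2 \<longrightarrow>
           transfer \<tau> (pi/3) u (pre @ [x, x + 2*(pi/3)] @ post)
              (insert_singlet (length pre) v) \<sigma>
         = wr \<tau> (pi/3) (x - u) * wr \<tau> (pi/3) (x + 2*(pi/3) - u) *
           insert_singlet (length pre) (transfer \<tau> (pi/3) u (pre @ post) v) \<sigma>"
proof (intro allI impI)
  fix \<sigma> :: "bool list"
  assume len: "length \<sigma> = length pre + length post + 2"
  define \<eta> :: complex where "\<eta> = of_real (pi/3)"
  define y where "y = x - u"
  have zy: "x + 2 * \<eta> - u = y + 2 * \<eta>" unfolding y_def by simp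
  have E: "wa \<tau> \<eta> y * wb \<tau> \<eta> (y + 2*\<eta>) - wc \<tau> \<eta> y * wc \<tau> \<eta> (y + 2*\<eta>)
           = wr \<tau> \<eta> y * wr \<tau> \<eta> (y + 2*\<eta>)"
    "wb \<tau> \<eta> y * wa \<tau> \<eta> (y + 2*\<eta>) - wd \<tau> \<eta> y * wd \<tau> \<eta> (y + 2*\<eta>)
           = wr \<tau> \<eta> y * wr \<tau> \<eta> (y + 2*\<eta>)"
    using E12[OF assms(1) \<eta>_def] by auto
  have T1: "wa \<tau> \<eta> y * wc \<tau> \<eta> (y + 2*\<eta>) = wc \<tau> \<eta> y * wb \<tau> \<eta> (y + 2*\<eta>)"
    unfolding wa_def wb_def wc_def by (simp only: mult_ac)
  have T2: "wd \<tau> \<eta> y * wa \<tau> \<eta> (y + 2*\<eta>) = wb \<tau> \<eta> y * wd \<tau> \<eta> (y + 2*\<eta>)"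
    unfolding wa_def wb_def wd_def by (simp only: mult_ac)
  have loc: "(\<Sum>b\<in>UNIV. \<Sum>s1\<in>UNIV. \<Sum>s2\<in>UNIV. Rent \<tau> \<eta> (x - u) (b, t1) (a, s1)
         * Rent \<tau> \<eta> (x + 2 * \<eta> - u) (c, t2) (b, s2) * singlet s1 s2)
         = (if c = a then wr \<tau> \<eta> (x - u) * wr \<tau> \<eta> (x + 2 * \<eta> - u) else 0) * singlet t1 t2" for t1 t2 a c
    unfolding zy y_def[symmetric] by (rule local_gen[OF E T1 T2])
  show "transfer \<tau> (pi/3) u (pre @ [x, x + 2*(pi/3)] @ post) (insert_singlet (length pre) v) \<sigma>
         = wr \<tau> (pi/3) (x - u) * wr \<tau> (pi/3) (x + 2*(pi/3) - u) *
           insert_singlet (length pre) (transfer \<tau> (pi/3) u (pre @ post) v) \<sigma>"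
    using main_comb[OF loc len] unfolding \<eta>_def by (simp only: of_real_mult of_real_numeral)
qed

end
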